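(* Let $\mathcal{H}$ and $\mathcal{K}$ be finite-dimensional complex Hilbert spaces, and let $\mathcal{HP}$ be the set of all Hermitian-preserving trace-preserving linear maps $B(\mathcal{H})\to B(\mathcal{K})$, with the topology induced by any norm. Let $\mathcal{SP}\subseteq\mathcal{HP}$ and $\mathcal{SN}\subseteq\mathcal{HP}$ be the subsets of SP maps and SN maps respectively. Then, with interior and closure taken in $\mathcal{HP}$, $$\operatorname{int}(\mathcal{SN})=\mathcal{SP}\quad\text{and}\quad \overline{\mathcal{SP}}=\mathcal{SN}.$$
   Context: $B(\mathcal{H})$ denotes all linear operators on $\mathcal{H}$; a density matrix is a positive semidefinite operator of trace one. A map is Hermitian-preserving if $\Psi(X^\dagger)=\Psi(X)^\dagger$ and trace-preserving if $\operatorname{Tr}\Psi(X)=\operatorname{Tr}X$. An HPTP map $\Psi$ is SP (semi-positive) if there is an invertible density matrix $\rho\in B(\mathcal{H})$ such that $\Psi(\rho)$ is an invertible density matrix; it is SN (semi-nonnegative) if there is a density matrix $\rho$ such that $\Psi(\rho)$ is a density matrix. *)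

theory Defs
  imports "HOL-Analysis.Analysis"
begin

text \<open>Operators on a finite-dimensional complex Hilbert space H = C^'n are
  matrices of type complex^'n^'n.\<close>

definition adj :: "complex^'n^'n \<Rightarrow> complex^'n^'n" where
  "adj X = (\<chi> i j. cnj (X $ j $ i))"

definition mtrace :: "complex^'n^'n \<Rightarrow> complex" where
  "mtrace X = (\<Sum>i\<in>UNIV. X $ i $ i)"

definition cscale :: "complex \<Rightarrow> complex^'n^'n \<Rightarrow> complex^'n^'n" where
  "cscale c X = (\<chi> i j. c * X $ i $ j)"

definition psd :: "complex^'n^'n \<Rightarrow> bool" where
  "psd X \<longleftrightarrow> (\<forall>v :: complex^'n.
     (\<Sum>i\<in>UNIV. \<Sum>j\<in>UNIV. cnj (v $ i) * X $ i $ j * v $ j) \<in> \<real> \<and>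
     0 \<le> Re (\<Sum>i\<in>UNIV. \<Sum>j\<in>UNIV. cnj (v $ i) * X $ i $ j * v $ j))"

definition density :: "complex^'n^'n \<Rightarrow> bool" where
  "density X \<longleftrightarrow> psd X \<and> mtrace X = 1"

text \<open>Elements of the blinfun type are (real-)linear and bounded; complex
  homogeneity is required explicitly. The topology is the operator-norm one.\<close>

definition HP :: "((complex^'n^'n) \<Rightarrow>\<^sub>L (complex^'m^'m)) set" where
  "HP = {\<Psi>. (\<forall>c X. blinfun_apply \<Psi> (cscale c X) = cscale c (blinfun_apply \<Psi> X)) \<and>
            (\<forall>X. blinfun_apply \<Psi> (adj X) = adj (blinfun_apply \<Psi> X)) \<and>
            (\<forall>X. mtrace (blinfun_apply \<Psi> X) = mtrace X)}"

definition SP :: "((complex^'n^'n) \<Rightarrow>\<^sub>L (complex^'m^'m)) set" where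
  "SP = {\<Psi>\<in>HP. \<exists>\<rho>. density \<rho> \<and> invertible \<rho> \<and>
                     density (blinfun_apply \<Psi> \<rho>) \<and> invertible (blinfun_apply \<Psi> \<rho>)}"

definition SN :: "((complex^'n^'n) \<Rightarrow>\<^sub>L (complex^'m^'m)) set" where
  "SN = {\<Psi>\<in>HP. \<exists>\<rho>. density \<rho> \<and> density (blinfun_apply \<Psi> \<rho>)}"

end

theory Submission
  imports Defs
begin

definition bf :: "complex^'n^'n \<Rightarrow> complex^'n \<Rightarrow> complex^'n \<Rightarrow> complex" where
  "bf X v w = (\<Sum>i\<in>UNIV. \<Sum>j\<in>UNIV. cnj (v $ i) * X $ i $ j * w $ j)"

definition NN :: "complex^'n \<Rightarrow> real" where
  "NN v = (\<Sum>i\<in>UNIV. (cmod (v $ i))^2)"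

definition ge :: "real \<Rightarrow> complex^'n^'n \<Rightarrow> bool" where
  "ge c X \<longleftrightarrow> (\<forall>v. bf X v v \<in> \<real> \<and> c * NN v \<le> Re (bf X v v))"

lemma psd_ge0: "psd X \<longleftrightarrow> ge 0 X"
  by (simp add: psd_def ge_def bf_def)

lemma NN_nonneg: "0 \<le> NN v"
  by (simp add: NN_def sum_nonneg)

lemma NN_zero: "NN v = 0 \<Longrightarrow> v = 0"
  unfolding NN_def
  by (subst (asm) sum_nonneg_eq_0_iff) (auto simp: vec_eq_iff)

lemma comp_le_NN: "(cmod (v $ i))^2 \<le> NN v"
  unfolding NN_def by (rule member_le_sum) auto

lemma bf_mulvec: "bf X v w = (\<Sum>i\<in>UNIV. cnj (v $ i) * (X *v w) $ i)"
  by (simp add: bf_def matrix_vector_mult_def sum_distrib_left mult.assoc)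

lemma sum_cnj_self: "(\<Sum>i\<in>UNIV. cnj (w $ i) * w $ i) = complex_of_real (NN w)"
  unfolding NN_def of_real_sum
  by (rule sum.cong) (auto simp: mult.commute complex_mult_cnj power2_eq_square cmod_def)

lemma ge_pos_invertible:
  assumes "ge c X" "c > 0"
  shows "invertible X"
proof -
  have "x = 0" if "X *v x = 0" for x
  proof -
    have "bf X x x = 0" using that by (simp add: bf_mulvec)
    then have "c * NN x \<le> 0" using assms(1) unfolding ge_def by (metis zero_complex.simps(1))
    then have "NN x = 0" using assms(2) NN_nonneg[of x]
      by (simp add: mult_le_0_iff)
    then show ?thesis by (rule NN_zero)
  qed
  then show ?thesis
    by (simp add: invertible_left_inverse matrix_left_invertible_ker)
qed

lemma invertible_ker: "invertible X \<Longrightarrow> X *v x = 0 \<Longrightarrow> x = 0"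
proof -
  assume a: "invertible X" "X *v x = 0"
  then obtain B where "B ** X = mat 1" unfolding invertible_def by blast
  then have "x = B *v (X *v x)" by (simp add: matrix_vector_mul_assoc)
  then show "x = 0" using a by simp
qed

lemma bf_expand:
  "bf X (\<chi> k. v$k + c * w$k) (\<chi> k. v$k + c * w$k) =
     bf X v v + c * bf X v w + cnj c * bf X w v + cnj c * c * bf X w w"
proof -
  have e: "cnj (v$i + c*w$i) * X$i$j * (v$j + c*w$j) = cnj (v$i) * X$i$j * v$j + c * (cnj (v$i) * X$i$j * w$j)
     + cnj c * (cnj (w$i) * X$i$j * v$j) + cnj c * c * (cnj (w$i) * X$i$j * w$j)" for i j
    by (simp add: algebra_simps)
  show ?thesis
    unfolding bf_def vec_lambda_beta e sum.distrib sum_distrib_left[symmetric] by simp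
qed

lemma bf_axis: "bf X (axis i 1) (axis j 1) = X $ i $ j"
proof -
  have e: "cnj (if a = i then 1 else 0) * X$a$b * (if b = j then 1 else 0) =
     (if b = j then (if a = i then X$i$j else 0) else 0)" for a b :: 'a
    by simp
  show ?thesis unfolding bf_def axis_def vec_lambda_beta e by simp
qed

lemma herm_entry:
  assumes "\<forall>v. bf X v v \<in> \<real>"
  shows "X $ j $ i = cnj (X $ i $ j)"
proof -
  let ?u = "\<lambda>c. (\<chi> k. axis i 1 $ k + c * axis j 1 $ k) :: complex^'a"
  have u: "bf X (?u c) (?u c) = X$i$i + c * X$i$j + cnj c * X$j$i + cnj c * c * X$j$j" for c
    unfolding bf_expand bf_axis by simp
  have a0: "Im (X$i$i) = 0" using assms[rule_format, of "axis i 1"]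
    by (simp add: complex_is_Real_iff bf_axis)
  have b0: "Im (X$j$j) = 0" using assms[rule_format, of "axis j 1"]
    by (simp add: complex_is_Real_iff bf_axis)
  have c1: "Im (X$i$j + X$j$i) = 0" using assms[rule_format, of "?u 1"] u[of 1] a0 b0
    by (simp add: complex_is_Real_iff)
  have c2: "Re (X$i$j) - Re (X$j$i) = 0" using assms[rule_format, of "?u \<i>"] u[of \<i>] a0 b0
    by (simp add: complex_is_Real_iff)
  show ?thesis using c1 c2 by (simp add: complex_eq_iff)
qed

lemma herm_of_real:
  assumes "\<forall>v. bf X v v \<in> \<real>"
  shows "adj X = X"
proof -
  have "cnj (X$j$i) = X$i$j" for i j using herm_entry[OF assms, of i j] by simp
  then show ?thesis unfolding adj_def by (simp add: vec_eq_iff)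
qed

lemma psd_herm: "psd X \<Longrightarrow> adj X = X"
  unfolding psd_ge0 ge_def by (intro herm_of_real) blast

lemma ge_herm: "ge c X \<Longrightarrow> adj X = X"
  unfolding ge_def by (intro herm_of_real) blast

lemma herm_real:
  assumes "adj X = X"
  shows "bf X v v \<in> \<real>"
proof -
  have e: "cnj (X $ i $ j) = X $ j $ i" for i j
  proof -
    have "adj X $ j $ i = X $ j $ i" using assms by simp
    then show ?thesis by (simp add: adj_def)
  qed
  have "cnj (bf X v v) = (\<Sum>i\<in>UNIV. \<Sum>j\<in>UNIV. v $ i * X $ j $ i * cnj (v $ j))"
    unfolding bf_def cnj_sum complex_cnj_mult e complex_cnj_cnj by simp
  also have "\<dots> = bf X v v"
    unfolding bf_def by (subst sum.swap) (simp add: ac_simps)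
  finally show ?thesis using Reals_cnj_iff by blast
qed

lemma NN_norm: "NN v = (norm v)^2"
  unfolding NN_def norm_vec_def L2_set_def by (simp add: sum_nonneg)

lemma bf_add: "bf (X + Y) v w = bf X v w + bf Y v w"
  by (simp add: bf_def ring_distribs sum.distrib)

lemma bf_diff: "bf (X - Y) v w = bf X v w - bf Y v w"
  by (simp add: bf_def ring_distribs sum_subtractf)

lemma bf_scaleR: "bf (r *\<^sub>R X) v w = of_real r * bf X v w"
proof -
  have e: "cnj (v $ i) * (r *\<^sub>R X) $ i $ j * w $ j = of_real r * (cnj (v $ i) * X $ i $ j * w $ j)" for i j
    by (simp only: vector_scaleR_component) (simp add: scaleR_conv_of_real)
  show ?thesis unfolding bf_def e by (simp add: sum_distrib_left)
qed

lemma ge_add: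
  assumes "ge a X" "ge b Y" shows "ge (a + b) (X + Y)"
  unfolding ge_def bf_add
proof
  fix v
  have "bf X v v \<in> \<real>" "a * NN v \<le> Re (bf X v v)" "bf Y v v \<in> \<real>" "b * NN v \<le> Re (bf Y v v)"
    using assms unfolding ge_def by auto
  then show "bf X v v + bf Y v v \<in> \<real> \<and> (a + b) * NN v \<le> Re (bf X v v + bf Y v v)"
    by (simp add: distrib_right)
qed

lemma ge_scale:
  assumes "ge a X" "0 \<le> r" shows "ge (r * a) (r *\<^sub>R X)"
  unfolding ge_def bf_scaleR
proof
  fix v
  have "bf X v v \<in> \<real>" "a * NN v \<le> Re (bf X v v)"
    using assms unfolding ge_def by auto
  moreover have "r * (a * NN v) \<le> r * Re (bf X v v)"
    using calculation(2) assms(2) by (rule mult_left_mono)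
  ultimately show "of_real r * bf X v v \<in> \<real> \<and> r * a * NN v \<le> Re (of_real r * bf X v v)"
    by (simp add: mult.assoc)
qed

lemma ge_mono:
  assumes "ge a X" "b \<le> a" shows "ge b X"
  unfolding ge_def
proof
  fix v
  have "bf X v v \<in> \<real>" "a * NN v \<le> Re (bf X v v)"
    using assms unfolding ge_def by auto
  moreover have "b * NN v \<le> a * NN v" using assms(2) NN_nonneg by (rule mult_right_mono)
  ultimately show "bf X v v \<in> \<real> \<and> b * NN v \<le> Re (bf X v v)" by linarith
qed

definition dg :: "real \<Rightarrow> complex^'n^'n" where
  "dg d = (\<chi> i j. if i = j then complex_of_real d else 0)"

lemma bf_dg: "bf (dg d) v v = of_real d * of_real (NN v)"
proof -
  have "bf (dg d) v v = (\<Sum>i\<in>UNIV. of_real d * (cnj (v $ i) * v $ i))"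
  proof -
    have e: "cnj (v $ i) * dg d $ i $ j * v $ j = (if j = i then of_real d * (cnj (v $ i) * v $ i) else 0)" for i j
      by (simp add: dg_def)
    show ?thesis unfolding bf_def e by simp
  qed
  also have "\<dots> = of_real d * of_real (NN v)"
    by (simp add: sum_distrib_left[symmetric] sum_cnj_self)
  finally show ?thesis .
qed

lemma ge_dg: "ge d (dg d)"
  unfolding ge_def bf_dg by simp

definition msum :: "complex^'n^'n \<Rightarrow> real" where
  "msum Z = (\<Sum>i\<in>UNIV. \<Sum>j\<in>UNIV. cmod (Z $ i $ j))"

lemma comp_prod_le: "cmod (v $ i) * cmod (v $ j) \<le> NN v"
proof -
  have "2 * (cmod (v $ i) * cmod (v $ j)) \<le> (cmod (v $ i))^2 + (cmod (v $ j))^2"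
    using sum_squares_bound[of "cmod (v $ i)" "cmod (v $ j)"] by (simp add: mult.assoc)
  then show ?thesis using comp_le_NN[of v i] comp_le_NN[of v j] by linarith
qed

lemma bf_bound: "cmod (bf Z v v) \<le> msum Z * NN v"
proof -
  have "cmod (bf Z v v) \<le> (\<Sum>i\<in>UNIV. \<Sum>j\<in>UNIV. cmod (cnj (v $ i) * Z $ i $ j * v $ j))"
    unfolding bf_def by (rule order_trans[OF norm_sum sum_mono[OF norm_sum]])
  also have "\<dots> \<le> (\<Sum>i\<in>UNIV. \<Sum>j\<in>UNIV. cmod (Z $ i $ j) * NN v)"
  proof (intro sum_mono)
    fix i j
    have "cmod (cnj (v $ i) * Z $ i $ j * v $ j) = cmod (Z $ i $ j) * (cmod (v $ i) * cmod (v $ j))"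
      by (simp add: norm_mult)
    also have "\<dots> \<le> cmod (Z $ i $ j) * NN v"
      by (rule mult_left_mono[OF comp_prod_le]) simp
    finally show "cmod (cnj (v $ i) * Z $ i $ j * v $ j) \<le> cmod (Z $ i $ j) * NN v" .
  qed
  also have "\<dots> = msum Z * NN v"
    by (simp add: msum_def sum_distrib_right)
  finally show ?thesis .
qed

lemma ge_herm_bound: "adj Z = Z \<Longrightarrow> ge (- msum Z) Z"
proof -
  assume h: "adj Z = Z"
  have "- msum Z * NN v \<le> Re (bf Z v v)" for v
    using bf_bound[of Z v] abs_Re_le_cmod[of "bf Z v v"] by linarith
  then show ?thesis unfolding ge_def using herm_real[OF h] by blast
qed

lemma msum_le_norm: "msum Z \<le> real (CARD('n)) * real (CARD('n)) * norm (Z :: complex^'n^'n)"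
proof -
  have "msum Z \<le> (\<Sum>i\<in>(UNIV::'n set). \<Sum>j\<in>(UNIV::'n set). norm Z)"
    unfolding msum_def
  proof (intro sum_mono)
    fix i j
    show "cmod (Z $ i $ j) \<le> norm Z"
      using Finite_Cartesian_Product.norm_nth_le[where x="Z$i" and i=j] Finite_Cartesian_Product.norm_nth_le[where x=Z and i=i] by linarith
  qed
  then show ?thesis by simp
qed

lemma quad_zero:
  fixes a b :: real
  assumes "\<forall>t. 0 \<le> 2*t*a + t^2*b"
  shows "a = 0"
proof (rule ccontr)
  assume a: "a \<noteq> 0"
  define k where "k = \<bar>b\<bar> + 1"
  have k: "k > 0" "b \<le> k" unfolding k_def by auto
  define t where "t = - a / k"
  have "2*t*a = -2 * a^2 / k" unfolding t_def by (simp add: power2_eq_square)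
  moreover have "t^2 * b \<le> t^2 * k" using k by (intro mult_left_mono) auto
  moreover have "t^2 * k = a^2 / k" unfolding t_def using k by (simp add: power2_eq_square field_simps)
  moreover have "a^2 / k > 0" using a k by simp
  ultimately have "2*t*a + t^2*b < 0" by linarith
  with assms show False by (meson not_le)
qed

lemma bf_smult_left: "bf X (\<chi> k. a * w$k) v = cnj a * bf X w v"
proof -
  have e: "cnj ((\<chi> k. a * w$k) $ i) * X $ i $ j * v $ j = cnj a * (cnj (w $ i) * X $ i $ j * v $ j)" for i j
    by simp
  show ?thesis unfolding bf_def e by (simp add: sum_distrib_left)
qed

lemma bf_smult: "bf X (\<chi> k. a * v$k) (\<chi> k. a * v$k) = cnj a * a * bf X v v"
proof -
  have e: "cnj ((\<chi> k. a * v$k) $ i) * X $ i $ j * (\<chi> k. a * v$k) $ j = (cnj a * a) * (cnj (v $ i) * X $ i $ j * v $ j)" for i j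
    by simp
  show ?thesis unfolding bf_def e by (simp add: sum_distrib_left)
qed

lemma bf_herm_swap:
  assumes "adj X = X"
  shows "bf X v w = cnj (bf X w v)"
proof -
  have e: "cnj (X $ i $ j) = X $ j $ i" for i j
  proof -
    have "adj X $ j $ i = X $ j $ i" using assms by simp
    then show ?thesis by (simp add: adj_def)
  qed
  have "cnj (bf X w v) = (\<Sum>i\<in>UNIV. \<Sum>j\<in>UNIV. w $ i * X $ j $ i * cnj (v $ j))"
    unfolding bf_def cnj_sum complex_cnj_mult e complex_cnj_cnj by simp
  also have "\<dots> = bf X v w"
    unfolding bf_def by (subst sum.swap) (simp add: ac_simps)
  finally show ?thesis by simp
qed

lemma psd_kernel:
  assumes "psd Y" "bf Y v v = 0"
  shows "Y *v v = 0"
proof -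
  have herm: "adj Y = Y" using assms(1) by (rule psd_herm)
  have re0: "Re (bf Y w v) = 0" for w
  proof (rule quad_zero[where b = "Re (bf Y w w)"], rule allI)
    fix t :: real
    have "0 \<le> Re (bf Y (\<chi> k. v$k + of_real t * w$k) (\<chi> k. v$k + of_real t * w$k))"
      using assms(1) unfolding psd_ge0 ge_def by simp
    also have "\<dots> = t * Re (bf Y v w) + t * Re (bf Y w v) + t^2 * Re (bf Y w w)"
      unfolding bf_expand using assms(2) by (simp add: power2_eq_square)
    also have "Re (bf Y v w) = Re (bf Y w v)"
      using bf_herm_swap[OF herm, of v w] by simp
    finally show "0 \<le> 2 * t * Re (bf Y w v) + t\<^sup>2 * Re (bf Y w w)" by simp
  qed
  have z: "bf Y w v = 0" for w
  proof -
    have "Re (bf Y (\<chi> k. \<i> * w$k) v) = 0" by (rule re0)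
    then have "Im (bf Y w v) = 0" unfolding bf_smult_left by simp
    with re0[of w] show ?thesis by (simp add: complex_eq_iff)
  qed
  let ?w = "Y *v v"
  have "bf Y ?w v = complex_of_real (NN ?w)"
    unfolding bf_mulvec sum_cnj_self ..
  then have "NN ?w = 0" using z[of ?w] by simp
  then show ?thesis by (rule NN_zero)
qed

lemma scaleR_chi: "r *\<^sub>R (v :: complex^'n) = (\<chi> k. of_real r * v $ k)"
  unfolding vec_eq_iff by (simp only: vector_scaleR_component vec_lambda_beta) (simp add: scaleR_conv_of_real)

lemma psd_inv_ge:
  fixes Y :: "complex^'n^'n"
  assumes "psd Y" "invertible Y"
  shows "\<exists>c>0. ge c Y"
proof -
  let ?S = "sphere (0::complex^'n) 1"
  let ?f = "\<lambda>v. Re (bf Y v v)"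
  have cS: "compact ?S" by simp
  obtain x :: "complex^'n" where "norm x = 1" using vector_choose_size[of 1] by auto
  then have nS: "?S \<noteq> {}" by auto
  have cont: "continuous_on ?S ?f"
    unfolding bf_def by (intro continuous_intros)
  obtain v0 where v0: "v0 \<in> ?S" "\<And>y. y \<in> ?S \<Longrightarrow> ?f v0 \<le> ?f y"
    using continuous_attains_inf[OF cS nS cont] by blast
  have real: "bf Y v v \<in> \<real>" "0 \<le> Re (bf Y v v)" for v
    using assms(1) unfolding psd_ge0 ge_def by auto
  have pos: "?f v0 > 0"
  proof (rule ccontr)
    assume "\<not> ?f v0 > 0"
    then have "Re (bf Y v0 v0) = 0" using real(2)[of v0] by simp
    then have "bf Y v0 v0 = 0" using real(1)[of v0] by (simp add: complex_eq_iff complex_is_Real_iff)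
    then have "Y *v v0 = 0" by (rule psd_kernel[OF assms(1)])
    then have "v0 = 0" by (rule invertible_ker[OF assms(2)])
    with v0(1) show False by simp
  qed
  have "ge (?f v0) Y"
    unfolding ge_def
  proof (intro allI conjI)
    fix v :: "complex^'n"
    show "bf Y v v \<in> \<real>" by (rule real)
    show "?f v0 * NN v \<le> Re (bf Y v v)"
    proof (cases "v = 0")
      case True
      then show ?thesis by (simp add: NN_def bf_def)
    next
      case False
      define r where "r = 1 / norm v"
      have nv: "norm v > 0" using False by simp
      have "r *\<^sub>R v \<in> ?S" using nv by (simp add: r_def)
      then have "?f v0 \<le> ?f (r *\<^sub>R v)" by (rule v0(2))
      also have "?f (r *\<^sub>R v) = r^2 * Re (bf Y v v)"
        unfolding scaleR_chi bf_smult by (simp add: power2_eq_square)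
      finally have "?f v0 * (norm v)^2 \<le> r^2 * Re (bf Y v v) * (norm v)^2"
        using nv by (simp add: mult_right_mono)
      also have "\<dots> = Re (bf Y v v)" using nv by (simp add: r_def field_simps)
      finally show ?thesis by (simp add: NN_norm)
    qed
  qed
  with pos show ?thesis by blast
qed

lemma mat_scaleR_nth: "(r *\<^sub>R (A :: complex^'a^'b)) $ i $ j = complex_of_real r * A $ i $ j"
  by (simp only: vector_scaleR_component) (simp add: scaleR_conv_of_real)

lemma adj_add: "adj (A + B) = adj A + adj B"
  by (simp add: adj_def vec_eq_iff)

lemma adj_diff: "adj (A - B) = adj A - adj B"
  by (simp add: adj_def vec_eq_iff)

lemma adj_scaleR: "adj (r *\<^sub>R A) = r *\<^sub>R adj A"
  by (simp add: adj_def vec_eq_iff mat_scaleR_nth)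

lemma cscale_add: "cscale c (A + B) = cscale c A + cscale c B"
  by (simp add: cscale_def vec_eq_iff ring_distribs)

lemma cscale_scaleR: "cscale c (r *\<^sub>R A) = r *\<^sub>R cscale c A"
  by (simp add: cscale_def vec_eq_iff mat_scaleR_nth ac_simps)

lemma mtrace_add: "mtrace (A + B) = mtrace A + mtrace B"
  by (simp add: mtrace_def sum.distrib)

lemma mtrace_scaleR: "mtrace (r *\<^sub>R A) = of_real r * mtrace A"
  unfolding mtrace_def mat_scaleR_nth by (simp add: sum_distrib_left)

lemma mtrace_cscale: "mtrace (cscale c A) = c * mtrace A"
  by (simp add: mtrace_def cscale_def sum_distrib_left)

lemma mtrace_adj: "mtrace (adj A) = cnj (mtrace A)"
  by (simp add: mtrace_def adj_def)

lemma HP_affine: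
  assumes "P \<in> HP" "Q \<in> HP"
  shows "(1 - t) *\<^sub>R P + t *\<^sub>R Q \<in> HP"
proof -
  have P: "\<And>c X. blinfun_apply P (cscale c X) = cscale c (blinfun_apply P X)"
    "\<And>X. blinfun_apply P (adj X) = adj (blinfun_apply P X)"
    "\<And>X. mtrace (blinfun_apply P X) = mtrace X"
    using assms(1) unfolding HP_def by blast+
  have Q: "\<And>c X. blinfun_apply Q (cscale c X) = cscale c (blinfun_apply Q X)"
    "\<And>X. blinfun_apply Q (adj X) = adj (blinfun_apply Q X)"
    "\<And>X. mtrace (blinfun_apply Q X) = mtrace X"
    using assms(2) unfolding HP_def by blast+
  show ?thesis unfolding HP_def
  proof (intro CollectI conjI allI)
    fix c X
    show "blinfun_apply ((1 - t) *\<^sub>R P + t *\<^sub>R Q) (cscale c X) =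
      cscale c (blinfun_apply ((1 - t) *\<^sub>R P + t *\<^sub>R Q) X)"
      by (simp only: blinfun.add_left blinfun.scaleR_left P Q cscale_add cscale_scaleR)
  next
    fix X
    show "blinfun_apply ((1 - t) *\<^sub>R P + t *\<^sub>R Q) (adj X) =
      adj (blinfun_apply ((1 - t) *\<^sub>R P + t *\<^sub>R Q) X)"
      by (simp only: blinfun.add_left blinfun.scaleR_left P Q adj_add adj_scaleR)
  next
    fix X
    have "mtrace (blinfun_apply ((1 - t) *\<^sub>R P + t *\<^sub>R Q) X) = of_real (1 - t) * mtrace X + of_real t * mtrace X"
      by (simp only: blinfun.add_left blinfun.scaleR_left P Q mtrace_add mtrace_scaleR)
    also have "\<dots> = mtrace X" by (simp add: algebra_simps)
    finally show "mtrace (blinfun_apply ((1 - t) *\<^sub>R P + t *\<^sub>R Q) X) = mtrace X" .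
  qed
qed

lemma HP_herm:
  assumes "P \<in> HP" "adj X = X"
  shows "adj (blinfun_apply P X) = blinfun_apply P X"
proof -
  have "blinfun_apply P (adj X) = adj (blinfun_apply P X)" using assms(1) unfolding HP_def by blast
  with assms(2) show ?thesis by simp
qed

lemma HP_trace: "P \<in> HP \<Longrightarrow> mtrace (blinfun_apply P X) = mtrace X"
  unfolding HP_def by blast

lemma adj_dg: "adj (dg d) = dg d"
  by (simp add: adj_def dg_def vec_eq_iff)

lemma mtrace_dg: "mtrace (dg d :: complex^'n^'n) = of_real (real CARD('n) * d)"
  by (simp add: mtrace_def dg_def)

definition phif :: "complex^'n^'n \<Rightarrow> complex^'m^'m" where
  "phif X = (\<chi> i j. if i = j then mtrace X / of_nat CARD('m) else 0)"

lemma phif_add: "phif (A + B) = phif A + phif B"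
  by (simp add: phif_def vec_eq_iff mtrace_add add_divide_distrib)

lemma phif_scaleR: "phif (r *\<^sub>R A) = r *\<^sub>R phif A"
  unfolding vec_eq_iff mat_scaleR_nth by (simp add: phif_def mtrace_scaleR)

lemma phif_bl: "bounded_linear phif"
proof -
  have "linear phif" by (rule linearI) (simp_all add: phif_add phif_scaleR)
  then show ?thesis by (simp add: linear_conv_bounded_linear)
qed

definition Phi :: "(complex^'n^'n) \<Rightarrow>\<^sub>L (complex^'m^'m)" where
  "Phi = Blinfun phif"

lemma Phi_apply: "blinfun_apply Phi X = phif X"
  unfolding Phi_def bounded_linear_Blinfun_apply[OF phif_bl] ..

lemma Phi_HP: "(Phi :: (complex^'n^'n) \<Rightarrow>\<^sub>L (complex^'m^'m)) \<in> HP"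
  unfolding HP_def mem_Collect_eq Phi_apply
proof (intro CollectI conjI allI)
  fix c and X :: "complex^'n^'n"
  show "(phif (cscale c X) :: complex^'m^'m) = cscale c (phif X)"
    using mtrace_cscale[of c X] by (simp add: phif_def cscale_def vec_eq_iff)
next
  fix X :: "complex^'n^'n"
  show "(phif (adj X) :: complex^'m^'m) = adj (phif X)"
    using mtrace_adj[of X] by (simp add: phif_def adj_def vec_eq_iff)
next
  fix X :: "complex^'n^'n"
  show "mtrace (phif X :: complex^'m^'m) = mtrace X"
    by (simp add: phif_def mtrace_def)
qed

lemma phif_density: "mtrace X = 1 \<Longrightarrow> (phif X :: complex^'m^'m) = dg (1 / real CARD('m))"
  by (simp add: phif_def dg_def vec_eq_iff)

lemma ge_density:
  assumes "ge c X" "c > 0" "mtrace X = 1"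
  shows "density X" "invertible X"
proof -
  have "ge 0 X" using assms(2) by (intro ge_mono[OF assms(1)]) simp
  then show "density X" using assms(3) by (simp add: density_def psd_ge0)
  show "invertible X" using assms(1,2) by (rule ge_pos_invertible)
qed

lemma msum_nonneg: "0 \<le> msum Z"
  unfolding msum_def by (intro sum_nonneg) auto

lemma key_SP:
  fixes P :: "(complex^'n^'n) \<Rightarrow>\<^sub>L (complex^'m^'m)"
  assumes P: "P \<in> HP" and rho: "density \<rho>" and g: "ge c0 (blinfun_apply P \<rho>)" and c0: "c0 > 0"
  shows "P \<in> SP"
proof -
  define \<sigma> where "\<sigma> = (dg (1 / real CARD('n)) :: complex^'n^'n)"
  define Z where "Z = blinfun_apply P \<sigma>"
  define M where "M = msum Z"
  have M0: "M \<ge> 0" unfolding M_def by (rule msum_nonneg)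
  have hZ: "adj Z = Z" unfolding Z_def \<sigma>_def by (rule HP_herm[OF P adj_dg])
  have gZ: "ge (- M) Z" unfolding M_def by (rule ge_herm_bound[OF hZ])
  define s where "s = min (1/2) (c0 / (2 * (M + 1)))"
  have s0: "s > 0" "s \<le> 1/2" unfolding s_def using c0 M0 by (auto simp: min_def)
  have "s * M \<le> c0 / (2 * (M + 1)) * M" unfolding s_def using M0 by (intro mult_right_mono) auto
  also have "\<dots> < c0 / 2" using M0 c0 by (simp add: field_simps)
  finally have sM: "s * M < c0 / 2" .
  define \<rho>s where "\<rho>s = (1 - s) *\<^sub>R \<rho> + s *\<^sub>R \<sigma>"
  have "ge 0 \<rho>" using rho by (simp add: density_def psd_ge0)
  then have "ge ((1 - s) * 0 + s * (1 / real CARD('n))) \<rho>s"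
    unfolding \<rho>s_def \<sigma>_def using s0 by (intro ge_add ge_scale ge_dg) auto
  then have g1: "ge (s / real CARD('n)) \<rho>s" by simp
  have tr1: "mtrace \<rho>s = 1"
    using rho unfolding \<rho>s_def \<sigma>_def density_def
    by (simp only: mtrace_add mtrace_scaleR mtrace_dg) (simp add: algebra_simps)
  have "blinfun_apply P \<rho>s = (1 - s) *\<^sub>R blinfun_apply P \<rho> + s *\<^sub>R Z"
    unfolding \<rho>s_def Z_def by (simp add: blinfun.add_right blinfun.scaleR_right)
  moreover have "ge ((1 - s) * c0 + s * (- M)) ((1 - s) *\<^sub>R blinfun_apply P \<rho> + s *\<^sub>R Z)"
    using s0 g gZ by (intro ge_add ge_scale) auto
  ultimately have g2: "ge ((1 - s) * c0 - s * M) (blinfun_apply P \<rho>s)" by simp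
  have pos2: "(1 - s) * c0 - s * M > 0"
  proof -
    have "s * c0 \<le> (1/2) * c0" using s0 c0 by (intro mult_right_mono) auto
    then have "(1 - s) * c0 \<ge> c0 / 2" by (simp add: algebra_simps)
    then show ?thesis using sM by linarith
  qed
  have tr2: "mtrace (blinfun_apply P \<rho>s) = 1" using HP_trace[OF P] tr1 by simp
  have "density \<rho>s" "invertible \<rho>s" using ge_density[OF g1 _ tr1] s0 by auto
  moreover have "density (blinfun_apply P \<rho>s)" "invertible (blinfun_apply P \<rho>s)"
    using ge_density[OF g2 pos2 tr2] by auto
  ultimately show ?thesis unfolding SP_def using P by blast
qed

lemma density_entry_bound:
  assumes "density X"
  shows "cmod (X $ i $ j) \<le> 2"
proof -
  have psd: "psd X" and tr: "mtrace X = 1" using assms by (auto simp: density_def)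
  have herm: "adj X = X" using psd by (rule psd_herm)
  have e: "X $ j $ i = cnj (X $ i $ j)"
  proof -
    have "adj X $ j $ i = X $ j $ i" using herm by simp
    then show ?thesis by (simp add: adj_def)
  qed
  have nn: "0 \<le> Re (bf X v v)" for v using psd unfolding psd_ge0 ge_def by simp
  have diag0: "0 \<le> Re (X $ k $ k)" for k using nn[of "axis k 1"] by (simp add: bf_axis)
  have diag1: "Re (X $ k $ k) \<le> 1" for k
  proof -
    have "Re (X $ k $ k) \<le> (\<Sum>l\<in>UNIV. Re (X $ l $ l))"
      by (rule member_le_sum) (auto intro: diag0)
    also have "\<dots> = Re (mtrace X)" by (simp add: mtrace_def)
    finally show ?thesis using tr by simp
  qed
  let ?u = "\<lambda>c. (\<chi> k. axis i 1 $ k + c * axis j 1 $ k) :: complex^'a"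
  have u: "Re (bf X (?u c) (?u c)) = Re (X$i$i) + Re (c * X$i$j) + Re (cnj c * cnj (X$i$j)) + Re (cnj c * c * X$j$j)" for c
    unfolding bf_expand bf_axis e by simp
  have c1: "0 \<le> Re (X$i$i) + 2 * Re (X$i$j) + Re (X$j$j)" using nn[of "?u 1"] u[of 1] by simp
  have c2: "0 \<le> Re (X$i$i) - 2 * Re (X$i$j) + Re (X$j$j)" using nn[of "?u (-1)"] u[of "-1"] by simp
  have c3: "0 \<le> Re (X$i$i) - 2 * Im (X$i$j) + Re (X$j$j)" using nn[of "?u \<i>"] u[of "\<i>"] by simp
  have c4: "0 \<le> Re (X$i$i) + 2 * Im (X$i$j) + Re (X$j$j)" using nn[of "?u (-\<i>)"] u[of "-\<i>"] by simp
  have "\<bar>Re (X$i$j)\<bar> \<le> 1" "\<bar>Im (X$i$j)\<bar> \<le> 1"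
    using c1 c2 c3 c4 diag1[of i] diag1[of j] by linarith+
  then show ?thesis using cmod_le[of "X$i$j"] by linarith
qed

lemma norm_le_sum_comp: "norm (x :: 'a::real_normed_vector^'n) \<le> (\<Sum>i\<in>UNIV. norm (x $ i))"
  unfolding norm_vec_def by (rule L2_set_le_sum) simp

lemma density_norm_bound:
  assumes "density (X :: complex^'n^'n)"
  shows "norm X \<le> real CARD('n) * (real CARD('n) * 2)"
proof -
  have "norm X \<le> (\<Sum>i\<in>UNIV. norm (X $ i))" by (rule norm_le_sum_comp)
  also have "\<dots> \<le> (\<Sum>i\<in>(UNIV::'n set). \<Sum>j\<in>(UNIV::'n set). 2)"
  proof (rule sum_mono)
    fix i
    have "norm (X $ i) \<le> (\<Sum>j\<in>UNIV. norm (X $ i $ j))" by (rule norm_le_sum_comp)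
    also have "\<dots> \<le> (\<Sum>j\<in>(UNIV::'n set). 2)"
      by (rule sum_mono) (simp add: density_entry_bound[OF assms])
    finally show "norm (X $ i) \<le> (\<Sum>j\<in>(UNIV::'n set). 2)" .
  qed
  finally show ?thesis by simp
qed

lemma density_closed: "closed {X :: complex^'n^'n. density X}"
proof -
  have eq: "{X :: complex^'n^'n. density X} =
    {X. (\<forall>v. Im (bf X v v) = 0 \<and> 0 \<le> Re (bf X v v)) \<and> mtrace X = 1}"
    by (auto simp: density_def psd_ge0 ge_def complex_is_Real_iff)
  show ?thesis unfolding eq unfolding bf_def mtrace_def
    by (intro closed_Collect_conj closed_Collect_all closed_Collect_eq closed_Collect_le continuous_intros)
qed

lemma density_compact: "compact {X :: complex^'n^'n. density X}"
proof -
  have "bounded {X :: complex^'n^'n. density X}"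
    unfolding bounded_iff using density_norm_bound by blast
  then show ?thesis using density_closed by (simp add: compact_eq_bounded_closed)
qed

lemma frac_lt:
  fixes e N :: real
  assumes "e > 0" "N \<ge> 0"
  shows "e / (2 * (N + 1)) * N < e"
proof -
  have "N / (2 * (N + 1)) < 1" using assms(2) by (simp add: divide_less_eq)
  then have "e * (N / (2 * (N + 1))) < e * 1" using assms(1) by (rule mult_strict_left_mono)
  then show ?thesis by simp
qed

lemma SP_SN: "SP \<subseteq> SN"
  unfolding SP_def SN_def by blast

lemma SP_open:
  fixes P :: "(complex^'n^'n) \<Rightarrow>\<^sub>L (complex^'m^'m)"
  assumes "P \<in> SP"
  shows "\<exists>e>0. \<forall>Q\<in>HP. dist Q P < e \<longrightarrow> Q \<in> SP"
proof -
  obtain \<rho> where PH: "P \<in> HP" and rho: "density \<rho>" "invertible \<rho>"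
    and Pr: "density (blinfun_apply P \<rho>)" "invertible (blinfun_apply P \<rho>)"
    using assms unfolding SP_def by blast
  obtain c where c: "c > 0" "ge c (blinfun_apply P \<rho>)"
    using psd_inv_ge[of "blinfun_apply P \<rho>"] Pr by (auto simp: density_def)
  have hr: "adj \<rho> = \<rho>" using rho by (simp add: density_def psd_herm)
  define K where "K = real CARD('m) * real CARD('m) * (norm \<rho> + 1)"
  have K: "K > 0" unfolding K_def by (simp add: add_nonneg_pos)
  define e where "e = c / (2 * K)"
  have e: "e > 0" unfolding e_def using c K by simp
  have "\<forall>Q\<in>HP. dist Q P < e \<longrightarrow> Q \<in> SP"
  proof (intro ballI impI)
    fix Q assume QH: "Q \<in> HP" and d: "dist Q P < e"
    define D where "D = blinfun_apply Q \<rho> - blinfun_apply P \<rho>"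
    have hD: "adj D = D" unfolding D_def adj_diff using HP_herm[OF QH hr] HP_herm[OF PH hr] by simp
    have "msum D \<le> real CARD('m) * real CARD('m) * norm D" by (rule msum_le_norm)
    also have "norm D \<le> norm (Q - P) * norm \<rho>"
      unfolding D_def blinfun.diff_left[symmetric] by (rule norm_blinfun)
    also have "norm (Q - P) * norm \<rho> \<le> e * (norm \<rho> + 1)"
      using d e by (intro mult_mono) (auto simp: dist_norm)
    finally have "msum D \<le> real CARD('m) * real CARD('m) * (e * (norm \<rho> + 1))"
      by (simp add: mult_left_mono)
    also have "\<dots> = c / 2" unfolding e_def K_def using K K_def by (simp add: field_simps)
    finally have mD: "msum D \<le> c / 2" .
    have "ge (c + - msum D) (blinfun_apply P \<rho> + D)"
      by (rule ge_add[OF c(2) ge_herm_bound[OF hD]])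
    then have "ge (c - msum D) (blinfun_apply Q \<rho>)" unfolding D_def by simp
    then show "Q \<in> SP" using key_SP[OF QH rho(1)] c mD by simp
  qed
  with e show ?thesis by blast
qed

lemma int_SN_SP:
  fixes P :: "(complex^'n^'n) \<Rightarrow>\<^sub>L (complex^'m^'m)"
  assumes PH: "P \<in> HP" and e: "e > 0" and sub: "\<forall>Q\<in>HP. dist Q P < e \<longrightarrow> Q \<in> SN"
  shows "P \<in> SP"
proof -
  define t where "t = e / (2 * (norm (P - Phi) + 1))"
  have t: "t > 0" unfolding t_def using e by (simp add: add_nonneg_pos)
  define Q where "Q = (1 - (-t)) *\<^sub>R P + (-t) *\<^sub>R Phi"
  have QH: "Q \<in> HP" unfolding Q_def by (rule HP_affine[OF PH Phi_HP])
  have "Q - P = t *\<^sub>R (P - Phi)" unfolding Q_def by (simp add: algebra_simps)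
  then have "dist Q P = t * norm (P - Phi)" using t by (simp add: dist_norm)
  also have "\<dots> < e" unfolding t_def using e by (intro frac_lt) auto
  finally have "Q \<in> SN" using sub QH by blast
  then obtain \<rho> where rho: "density \<rho>" and Qr: "density (blinfun_apply Q \<rho>)"
    unfolding SN_def by blast
  define B where "B = (dg (1 / real CARD('m)) :: complex^'m^'m)"
  have QB: "blinfun_apply Q \<rho> = (1 + t) *\<^sub>R blinfun_apply P \<rho> - t *\<^sub>R B"
    using rho unfolding Q_def B_def density_def
    by (simp add: blinfun.add_left blinfun.diff_left blinfun.scaleR_left Phi_apply phif_density)
  have "ge (0 + t * (1 / real CARD('m))) (blinfun_apply Q \<rho> + t *\<^sub>R B)"
    using Qr t unfolding B_def density_def psd_ge0 by (intro ge_add ge_scale ge_dg) auto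
  moreover have "blinfun_apply Q \<rho> + t *\<^sub>R B = (1 + t) *\<^sub>R blinfun_apply P \<rho>" unfolding QB by simp
  ultimately have "ge (t / real CARD('m)) ((1 + t) *\<^sub>R blinfun_apply P \<rho>)" by simp
  then have "ge (1 / (1 + t) * (t / real CARD('m))) ((1 / (1 + t)) *\<^sub>R ((1 + t) *\<^sub>R blinfun_apply P \<rho>))"
    using t by (intro ge_scale) auto
  moreover have "(1 / (1 + t)) *\<^sub>R ((1 + t) *\<^sub>R blinfun_apply P \<rho>) = blinfun_apply P \<rho>"
    using t by simp
  ultimately have "ge (1 / (1 + t) * (t / real CARD('m))) (blinfun_apply P \<rho>)" by simp
  moreover have "1 / (1 + t) * (t / real CARD('m)) > 0" using t by simp
  ultimately show ?thesis using key_SP[OF PH rho] by blast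
qed

lemma SN_approx:
  fixes P :: "(complex^'n^'n) \<Rightarrow>\<^sub>L (complex^'m^'m)"
  assumes "P \<in> SN" "e > 0"
  shows "\<exists>Q\<in>SP. dist Q P < e"
proof -
  obtain \<rho> where PH: "P \<in> HP" and rho: "density \<rho>" and Pr: "density (blinfun_apply P \<rho>)"
    using assms(1) unfolding SN_def by blast
  define t where "t = min (1/2) (e / (2 * (norm (Phi - P) + 1)))"
  have t: "t > 0" "t \<le> 1/2" unfolding t_def using assms(2) by (auto simp: min_def add_nonneg_pos)
  define Q where "Q = (1 - t) *\<^sub>R P + t *\<^sub>R Phi"
  have QH: "Q \<in> HP" unfolding Q_def by (rule HP_affine[OF PH Phi_HP])
  have "Q - P = t *\<^sub>R (Phi - P)" unfolding Q_def by (simp add: algebra_simps)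
  then have "dist Q P = t * norm (Phi - P)" using t by (simp add: dist_norm)
  also have "\<dots> \<le> e / (2 * (norm (Phi - P) + 1)) * norm (Phi - P)"
    unfolding t_def by (intro mult_right_mono) auto
  also have "\<dots> < e" using assms(2) by (intro frac_lt) auto
  finally have d: "dist Q P < e" .
  define B where "B = (dg (1 / real CARD('m)) :: complex^'m^'m)"
  have QB: "blinfun_apply Q \<rho> = (1 - t) *\<^sub>R blinfun_apply P \<rho> + t *\<^sub>R B"
    using rho unfolding Q_def B_def density_def
    by (simp add: blinfun.add_left blinfun.diff_left blinfun.scaleR_left Phi_apply phif_density)
  have "ge ((1 - t) * 0 + t * (1 / real CARD('m))) ((1 - t) *\<^sub>R blinfun_apply P \<rho> + t *\<^sub>R B)"
    using Pr t unfolding B_def density_def psd_ge0 by (intro ge_add ge_scale ge_dg) auto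
  then have "ge (t / real CARD('m)) (blinfun_apply Q \<rho>)" unfolding QB by simp
  moreover have "t / real CARD('m) > 0" using t by simp
  ultimately have "Q \<in> SP" using key_SP[OF QH rho] by blast
  with d show ?thesis by blast
qed

lemma closure_SP_SN:
  fixes P :: "(complex^'n^'n) \<Rightarrow>\<^sub>L (complex^'m^'m)"
  assumes PH: "P \<in> HP" and cl: "P \<in> closure SP"
  shows "P \<in> SN"
proof -
  obtain x where x: "\<And>n. x n \<in> SP" and lim: "x \<longlonglongrightarrow> P"
    using cl unfolding closure_sequential by blast
  have "\<forall>n. \<exists>\<rho>. density \<rho> \<and> density (blinfun_apply (x n) \<rho>)"
    using x unfolding SP_def by blast
  then obtain \<rho> where rho: "\<And>n. density (\<rho> n)" and xr: "\<And>n. density (blinfun_apply (x n) (\<rho> n))"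
    by metis
  have sc: "seq_compact {X :: complex^'n^'n. density X}"
    by (rule compact_imp_seq_compact[OF density_compact])
  obtain l r where l: "l \<in> {X. density X}" and r: "strict_mono (r :: nat \<Rightarrow> nat)"
    and lr: "(\<rho> \<circ> r) \<longlonglongrightarrow> l"
    using seq_compactE[OF sc, of \<rho>] rho by blast
  have xr_lim: "(x \<circ> r) \<longlonglongrightarrow> P" by (rule LIMSEQ_subseq_LIMSEQ[OF lim r])
  have "(\<lambda>n. blinfun_apply ((x \<circ> r) n) ((\<rho> \<circ> r) n)) \<longlonglongrightarrow> blinfun_apply P l"
    by (rule bounded_bilinear.tendsto[OF bounded_bilinear_blinfun_apply xr_lim lr])
  then have "blinfun_apply P l \<in> {X. density X}"
    by (rule closed_sequentially[OF density_closed, rotated]) (simp add: xr)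
  then show ?thesis unfolding SN_def using PH l by blast
qed

theorem theorem4:
  shows "(top_of_set (HP :: ((complex^'n^'n) \<Rightarrow>\<^sub>L (complex^'m^'m)) set)) interior_of SN = SP
     \<and> (top_of_set (HP :: ((complex^'n^'n) \<Rightarrow>\<^sub>L (complex^'m^'m)) set)) closure_of SP = SN"
proof
  show "(top_of_set (HP :: ((complex^'n^'n) \<Rightarrow>\<^sub>L (complex^'m^'m)) set)) interior_of SN = SP"
  proof
    show "top_of_set HP interior_of SN \<subseteq> (SP :: ((complex^'n^'n) \<Rightarrow>\<^sub>L (complex^'m^'m)) set)"
    proof
      fix P :: "(complex^'n^'n) \<Rightarrow>\<^sub>L (complex^'m^'m)"
      assume "P \<in> top_of_set HP interior_of SN"
      then obtain T where T: "openin (top_of_set HP) T" "P \<in> T" "T \<subseteq> SN"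
        unfolding interior_of_def by blast
      then obtain U where U: "open U" "T = HP \<inter> U" unfolding openin_open by blast
      then have PH: "P \<in> HP" and PU: "P \<in> U" using T by auto
      obtain e where e: "e > 0" "ball P e \<subseteq> U" using open_contains_ball U(1) PU by blast
      have "\<forall>Q\<in>HP. dist Q P < e \<longrightarrow> Q \<in> SN"
      proof (intro ballI impI)
        fix Q assume QH: "Q \<in> HP" and "dist Q P < e"
        then have "Q \<in> ball P e" by (simp add: dist_commute)
        then have "Q \<in> T" using e(2) U(2) QH by blast
        then show "Q \<in> SN" using T(3) by blast
      qed
      then show "P \<in> SP" using int_SN_SP[OF PH e(1)] by blast
    qed
  next
    show "(SP :: ((complex^'n^'n) \<Rightarrow>\<^sub>L (complex^'m^'m)) set) \<subseteq> top_of_set HP interior_of SN"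
    proof
      fix P :: "(complex^'n^'n) \<Rightarrow>\<^sub>L (complex^'m^'m)"
      assume P: "P \<in> SP"
      then have PH: "P \<in> HP" unfolding SP_def by blast
      obtain e where e: "e > 0" "\<forall>Q\<in>HP. dist Q P < e \<longrightarrow> Q \<in> SP" using SP_open[OF P] by blast
      have "openin (top_of_set HP) (HP \<inter> ball P e)" unfolding openin_open by blast
      moreover have "P \<in> HP \<inter> ball P e" using PH e by simp
      moreover have "HP \<inter> ball P e \<subseteq> SN" using e SP_SN by (auto simp: dist_commute)
      ultimately show "P \<in> top_of_set HP interior_of SN" unfolding interior_of_def by blast
    qed
  qed
next
  have "(top_of_set (HP :: ((complex^'n^'n) \<Rightarrow>\<^sub>L (complex^'m^'m)) set)) closure_of SP = HP \<inter> closure (HP \<inter> SP)"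
    by (simp add: closure_of_subtopology)
  also have "HP \<inter> SP = SP" unfolding SP_def by blast
  also have "HP \<inter> closure SP = (SN :: ((complex^'n^'n) \<Rightarrow>\<^sub>L (complex^'m^'m)) set)"
  proof
    show "HP \<inter> closure SP \<subseteq> (SN :: ((complex^'n^'n) \<Rightarrow>\<^sub>L (complex^'m^'m)) set)"
      using closure_SP_SN by blast
    show "(SN :: ((complex^'n^'n) \<Rightarrow>\<^sub>L (complex^'m^'m)) set) \<subseteq> HP \<inter> closure SP"
    proof
      fix P :: "(complex^'n^'n) \<Rightarrow>\<^sub>L (complex^'m^'m)"
      assume P: "P \<in> SN"
      then have "P \<in> HP" unfolding SN_def by blast
      moreover have "P \<in> closure SP" unfolding closure_approachable using SN_approx[OF P] by blast
      ultimately show "P \<in> HP \<inter> closure SP" by blast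
    qed
  qed
  finally show "(top_of_set (HP :: ((complex^'n^'n) \<Rightarrow>\<^sub>L (complex^'m^'m)) set)) closure_of SP = SN" .
qed

end
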